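(* Let $(H,R)$ be a quasitriangular Hopf algebra. Then at least one of the following holds: (i) $|G(H^o)|=1$; (ii) $|G(H^o)|\neq1$ and $G(H^o)\cap Z(H^o)\neq\{1\}$; (iii) $|G(H^o)|\neq1$, $G(H^o)\cap Z(H^o)=\{1\}$, and the center $Z(G(H))$ of the group $G(H)$ is nontrivial.
   Context: Quasitriangular $(H,R)$: $R$ invertible with $(\Delta\otimes\mathrm{id})(R)=R_{13}R_{23}$, $(\mathrm{id}\otimes\Delta)(R)=R_{13}R_{12}$, $\tau\Delta(h)=R\Delta(h)R^{-1}$. $H^o$ is the finite dual Hopf algebra $\{f\in H^*\mid f$ vanishes on some finite-codimensional ideal$\}$. $G(B)$ denotes the group of group-like elements of a Hopf algebra $B$, $Z(B)$ its center. *)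

theory Defs
  imports Main "HOL.Vector_Spaces"
begin

text \<open>Tensors in H (x) H (resp. H (x) H (x) H) are represented as finite
formal sums, i.e. lists of pairs (resp. triples); two such representations denote the
same tensor iff all functionals f (x) g (resp. f (x) g (x) l) with f, g, l linear
agree on them (linear functionals separate points of tensor products of vector
spaces over a field).\<close>

definition lin :: "('k::field \<Rightarrow> 'h::ring_1 \<Rightarrow> 'h) \<Rightarrow> ('h \<Rightarrow> 'k) \<Rightarrow> bool" where
  "lin scale f \<longleftrightarrow> Vector_Spaces.linear scale (*) f"

definition ev2 :: "('h \<Rightarrow> 'k::field) \<Rightarrow> ('h \<Rightarrow> 'k) \<Rightarrow> ('h \<times> 'h) list \<Rightarrow> 'k" where
  "ev2 f g T = sum_list (map (\<lambda>(a, b). f a * g b) T)"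

definition ev3 :: "('h \<Rightarrow> 'k::field) \<Rightarrow> ('h \<Rightarrow> 'k) \<Rightarrow> ('h \<Rightarrow> 'k) \<Rightarrow> ('h \<times> 'h \<times> 'h) list \<Rightarrow> 'k" where
  "ev3 f g l U = sum_list (map (\<lambda>(a, b, c). f a * g b * l c) U)"

definition teq2 :: "('k::field \<Rightarrow> 'h::ring_1 \<Rightarrow> 'h) \<Rightarrow> ('h \<times> 'h) list \<Rightarrow> ('h \<times> 'h) list \<Rightarrow> bool" where
  "teq2 scale T S \<longleftrightarrow> (\<forall>f g. lin scale f \<and> lin scale g \<longrightarrow> ev2 f g T = ev2 f g S)"

definition teq3 :: "('k::field \<Rightarrow> 'h::ring_1 \<Rightarrow> 'h) \<Rightarrow> ('h \<times> 'h \<times> 'h) list \<Rightarrow> ('h \<times> 'h \<times> 'h) list \<Rightarrow> bool" where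
  "teq3 scale T S \<longleftrightarrow> (\<forall>f g l. lin scale f \<and> lin scale g \<and> lin scale l \<longrightarrow> ev3 f g l T = ev3 f g l S)"

definition tmul2 :: "('h::ring_1 \<times> 'h) list \<Rightarrow> ('h \<times> 'h) list \<Rightarrow> ('h \<times> 'h) list" where
  "tmul2 T S = concat (map (\<lambda>(a, b). map (\<lambda>(c, d). (a * c, b * d)) S) T)"

definition tmul3 :: "('h::ring_1 \<times> 'h \<times> 'h) list \<Rightarrow> ('h \<times> 'h \<times> 'h) list \<Rightarrow> ('h \<times> 'h \<times> 'h) list" where
  "tmul3 T S = concat (map (\<lambda>(a, b, c). map (\<lambda>(x, y, z). (a * x, b * y, c * z)) S) T)"

definition delta_id :: "('h \<Rightarrow> ('h \<times> 'h) list) \<Rightarrow> ('h \<times> 'h) list \<Rightarrow> ('h \<times> 'h \<times> 'h) list" where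
  "delta_id \<Delta> T = concat (map (\<lambda>(a, b). map (\<lambda>(x, y). (x, y, b)) (\<Delta> a)) T)"

definition id_delta :: "('h \<Rightarrow> ('h \<times> 'h) list) \<Rightarrow> ('h \<times> 'h) list \<Rightarrow> ('h \<times> 'h \<times> 'h) list" where
  "id_delta \<Delta> T = concat (map (\<lambda>(a, b). map (\<lambda>(x, y). (a, x, y)) (\<Delta> b)) T)"

definition hopf_algebra ::
  "('k::field \<Rightarrow> 'h::ring_1 \<Rightarrow> 'h) \<Rightarrow> ('h \<Rightarrow> ('h \<times> 'h) list) \<Rightarrow> ('h \<Rightarrow> 'k) \<Rightarrow> ('h \<Rightarrow> 'h) \<Rightarrow> bool" where
  "hopf_algebra scale \<Delta> \<epsilon> S \<longleftrightarrow>
     \<comment> \<open>associative unital k-algebra\<close>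
     Vector_Spaces.vector_space scale \<and>
     (\<forall>c x y. scale c (x * y) = scale c x * y \<and> scale c (x * y) = x * scale c y) \<and>
     \<comment> \<open>Delta is a linear, unital, multiplicative map H \<rightarrow> H (x) H\<close>
     (\<forall>x y. teq2 scale (\<Delta> (x + y)) (\<Delta> x @ \<Delta> y)) \<and>
     (\<forall>c x. teq2 scale (\<Delta> (scale c x)) (map (\<lambda>(a, b). (scale c a, b)) (\<Delta> x))) \<and>
     (\<forall>x y. teq2 scale (\<Delta> (x * y)) (tmul2 (\<Delta> x) (\<Delta> y))) \<and>
     teq2 scale (\<Delta> 1) [(1, 1)] \<and>
     \<comment> \<open>coassociativity\<close>
     (\<forall>h. teq3 scale (delta_id \<Delta> (\<Delta> h)) (id_delta \<Delta> (\<Delta> h))) \<and>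
     \<comment> \<open>counit: a linear algebra map H \<rightarrow> k\<close>
     lin scale \<epsilon> \<and> (\<forall>x y. \<epsilon> (x * y) = \<epsilon> x * \<epsilon> y) \<and> \<epsilon> 1 = 1 \<and>
     (\<forall>h. sum_list (map (\<lambda>(a, b). scale (\<epsilon> a) b) (\<Delta> h)) = h) \<and>
     (\<forall>h. sum_list (map (\<lambda>(a, b). scale (\<epsilon> b) a) (\<Delta> h)) = h) \<and>
     \<comment> \<open>antipode: a linear map with the antipode identities\<close>
     Vector_Spaces.linear scale scale S \<and>
     (\<forall>h. sum_list (map (\<lambda>(a, b). S a * b) (\<Delta> h)) = scale (\<epsilon> h) 1) \<and>
     (\<forall>h. sum_list (map (\<lambda>(a, b). a * S b) (\<Delta> h)) = scale (\<epsilon> h) 1)"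

definition quasitriangular ::
  "('k::field \<Rightarrow> 'h::ring_1 \<Rightarrow> 'h) \<Rightarrow> ('h \<Rightarrow> ('h \<times> 'h) list) \<Rightarrow> ('h \<times> 'h) list \<Rightarrow> bool" where
  "quasitriangular scale \<Delta> R \<longleftrightarrow>
     (\<exists>Rinv. teq2 scale (tmul2 R Rinv) [(1, 1)] \<and> teq2 scale (tmul2 Rinv R) [(1, 1)] \<and>
        (\<forall>h. teq2 scale (map (\<lambda>(a, b). (b, a)) (\<Delta> h)) (tmul2 (tmul2 R (\<Delta> h)) Rinv))) \<and>
     teq3 scale (delta_id \<Delta> R)
       (tmul3 (map (\<lambda>(a, b). (a, 1, b)) R) (map (\<lambda>(a, b). (1, a, b)) R)) \<and>
     teq3 scale (id_delta \<Delta> R)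
       (tmul3 (map (\<lambda>(a, b). (a, 1, b)) R) (map (\<lambda>(a, b). (a, b, 1)) R))"

definition grouplikes :: "('k::field \<Rightarrow> 'h::ring_1 \<Rightarrow> 'h) \<Rightarrow> ('h \<Rightarrow> ('h \<times> 'h) list) \<Rightarrow> 'h set" where
  "grouplikes scale \<Delta> = {g. g \<noteq> 0 \<and> teq2 scale (\<Delta> g) [(g, g)]}"

definition grouplikes_center :: "('k::field \<Rightarrow> 'h::ring_1 \<Rightarrow> 'h) \<Rightarrow> ('h \<Rightarrow> ('h \<times> 'h) list) \<Rightarrow> 'h set" where
  "grouplikes_center scale \<Delta> =
     {g \<in> grouplikes scale \<Delta>. \<forall>x \<in> grouplikes scale \<Delta>. g * x = x * g}"

definition fin_codim_ideal :: "('k::field \<Rightarrow> 'h::ring_1 \<Rightarrow> 'h) \<Rightarrow> 'h set \<Rightarrow> bool" where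
  "fin_codim_ideal scale I \<longleftrightarrow>
     module.subspace scale I \<and> (\<forall>x \<in> I. \<forall>h. h * x \<in> I \<and> x * h \<in> I) \<and>
     (\<exists>B. finite B \<and> (\<forall>h. \<exists>v \<in> module.span scale B. h - v \<in> I))"

definition finite_dual :: "('k::field \<Rightarrow> 'h::ring_1 \<Rightarrow> 'h) \<Rightarrow> ('h \<Rightarrow> 'k) set" where
  "finite_dual scale =
     {f. lin scale f \<and> (\<exists>I. fin_codim_ideal scale I \<and> (\<forall>x \<in> I. f x = 0))}"

definition conv :: "('h \<Rightarrow> ('h \<times> 'h) list) \<Rightarrow> ('h \<Rightarrow> 'k::field) \<Rightarrow> ('h \<Rightarrow> 'k) \<Rightarrow> ('h \<Rightarrow> 'k)" where
  "conv \<Delta> f g = (\<lambda>h. ev2 f g (\<Delta> h))"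

text \<open>Group-like elements of H^o: f \<noteq> 0 with Delta^o(f) = f (x) f, where
Delta^o(f)(x (x) y) = f(x y); i.e. f(x y) = f x * f y.\<close>
definition dual_grouplikes :: "('k::field \<Rightarrow> 'h::ring_1 \<Rightarrow> 'h) \<Rightarrow> ('h \<Rightarrow> 'k) set" where
  "dual_grouplikes scale =
     {f \<in> finite_dual scale. f \<noteq> (\<lambda>_. 0) \<and> (\<forall>x y. f (x * y) = f x * f y)}"

definition dual_center :: "('k::field \<Rightarrow> 'h::ring_1 \<Rightarrow> 'h) \<Rightarrow> ('h \<Rightarrow> ('h \<times> 'h) list) \<Rightarrow> ('h \<Rightarrow> 'k) set" where
  "dual_center scale \<Delta> =
     {f \<in> finite_dual scale. \<forall>g \<in> finite_dual scale. conv \<Delta> f g = conv \<Delta> g f}"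

end

theory Submission
  imports Defs
begin


lemma lin_props:
  assumes "lin scale f"
  shows "f (x + y) = f x + f y" "f (scale c x) = c * f x" "f 0 = 0"
    "vector_space scale"
proof -
  have L: "vector_space scale" "vector_space ((*)::'a\<Rightarrow>'a\<Rightarrow>'a)"
     "\<forall>x y. f (x + y) = f x + f y" "\<forall>c x. f (scale c x) = c * f x"
    using assms unfolding lin_def linear_iff by auto
  show "f (x + y) = f x + f y" "f (scale c x) = c * f x" "vector_space scale" using L by auto
  have "f (scale 0 0) = 0 * f 0" using L by auto
  then show "f 0 = 0" using module.scale_zero_left[OF L(1)[folded module_iff_vector_space]] by simp
qed

lemma lin_diff: assumes "lin scale f" shows "f (x - y) = f x - f y"
proof -
  have "f (x - y + y) = f (x - y) + f y" using lin_props(1)[OF assms] .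
  then show ?thesis by (simp add: algebra_simps)
qed

lemma lin_sum_list:
  assumes "lin scale f"
  shows "f (\<Sum>x\<leftarrow>xs. h x) = (\<Sum>x\<leftarrow>xs. f (h x))"
  by (induction xs) (auto simp: lin_props[OF assms])

lemma sum_list_swap:
  "(\<Sum>x\<leftarrow>xs. \<Sum>y\<leftarrow>ys. F x y) = (\<Sum>y\<leftarrow>ys. \<Sum>x\<leftarrow>xs. (F x y :: 'a::comm_monoid_add))"
  by (induction xs) (auto simp: sum_list_addf)

lemma ev2_alt: "ev2 f g T = (\<Sum>t\<leftarrow>T. f (fst t) * g (snd t))"
  unfolding ev2_def by (induction T) auto

lemma ev3_alt: "ev3 f g l T = (\<Sum>t\<leftarrow>T. f (fst t) * g (fst (snd t)) * l (snd (snd t)))"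
  unfolding ev3_def by (induction T) auto

lemma sum_tmul2:
  "(\<Sum>x\<leftarrow>tmul2 T S. F x) = (\<Sum>t\<leftarrow>T. \<Sum>s\<leftarrow>S. F (fst t * fst s, snd t * snd s))"
  unfolding tmul2_def by (induction T) (auto simp: case_prod_beta comp_def)

lemma sum_tmul3:
  "(\<Sum>x\<leftarrow>tmul3 T S. F x) = (\<Sum>t\<leftarrow>T. \<Sum>s\<leftarrow>S. F (fst t * fst s, fst (snd t) * fst (snd s), snd (snd t) * snd (snd s)))"
  unfolding tmul3_def by (induction T) (auto simp: case_prod_beta comp_def)

lemma sum_id_delta:
  "(\<Sum>x\<leftarrow>id_delta D T. F x) = (\<Sum>t\<leftarrow>T. \<Sum>s\<leftarrow>D (snd t). F (fst t, fst s, snd s))"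
  unfolding id_delta_def by (induction T) (auto simp: case_prod_beta comp_def)

lemma ev2_tmul2_assoc:
  "ev2 p q (tmul2 (tmul2 A B) C) = ev2 p q (tmul2 A (tmul2 B C))"
  unfolding ev2_alt sum_tmul2 by (simp add: mult.assoc)

lemma tmul2_one: "tmul2 X [(1,1)] = X"
  unfolding tmul2_def by (induction X) auto



lemma vs_field: "vector_space ((*)::'k::field\<Rightarrow>'k\<Rightarrow>'k)"
  by unfold_locales (simp_all add: algebra_simps)

lemma exists_sep:
  fixes scale :: "'k::field \<Rightarrow> 'h::ring_1 \<Rightarrow> 'h"
  assumes VS: "vector_space scale" and ind: "\<not> module.dependent scale C"
    and nb: "b \<notin> module.span scale C"
  shows "\<exists>g. lin scale g \<and> g b = 1 \<and> (\<forall>y\<in>module.span scale C. g y = 0)"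
proof -
  interpret vs: vector_space scale by fact
  interpret vector_space_pair scale "(*)::'k\<Rightarrow>'k\<Rightarrow>'k"
    using VS vs_field by (simp add: vector_space_pair_def)
  have ind2: "vs.independent (insert b C)" using vs.independent_insertI nb ind by blast
  define g where "g = construct (insert b C) (\<lambda>v. if v = b then (1::'k) else 0)"
  have lg: "Vector_Spaces.linear scale (*) g" unfolding g_def using linear_construct[OF ind2] .
  have gb: "g b = 1" by (simp add: g_def construct_basis[OF ind2])
  have gC: "g y = 0" if "y \<in> C" for y
  proof -
    have "y \<noteq> b" using that nb vs.span_base by blast
    then show ?thesis using that by (simp add: g_def construct_basis[OF ind2])
  qed
  have "\<forall>y\<in>vs.span C. g y = 0"
  proof
    fix y assume y: "y \<in> vs.span C"
    show "g y = 0"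
      using linear_eq_on[OF lg linear_zero y] gC by simp
  qed
  then show ?thesis using lg gb unfolding lin_def by blast
qed

lemma exists_nonzero_fun:
  fixes scale :: "'k::field \<Rightarrow> 'h::ring_1 \<Rightarrow> 'h"
  assumes VS: "vector_space scale" and a: "a \<noteq> 0"
  shows "\<exists>g. lin scale g \<and> g a = 1"
proof -
  interpret vs: vector_space scale by fact
  have "a \<notin> vs.span {}" using a by simp
  then show ?thesis using exists_sep[OF VS vs.independent_empty] by blast
qed

lemma separate:
  fixes scale :: "'k::field \<Rightarrow> 'h::ring_1 \<Rightarrow> 'h"
  assumes VS: "vector_space scale" and "\<And>g. lin scale g \<Longrightarrow> g a = g b"
  shows "a = b"
proof (rule ccontr)
  assume "a \<noteq> b"
  then obtain g where g: "lin scale g" "g (a - b) = 1" using exists_nonzero_fun[OF VS, of "a-b"] by auto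
  then show False using assms(2)[OF g(1)] lin_diff[OF g(1)] by simp
qed



lemma span_list_coeffs:
  fixes scale :: "'k::field \<Rightarrow> 'h::ring_1 \<Rightarrow> 'h"
  assumes VS: "vector_space scale"
  shows "b \<in> module.span scale (set ys) \<Longrightarrow>
    \<exists>cs. length cs = length ys \<and> b = (\<Sum>p\<leftarrow>zip cs ys. scale (fst p) (snd p))"
proof (induction ys arbitrary: b)
  case Nil
  interpret vs: vector_space scale by fact
  show ?case using Nil by simp
next
  case (Cons y ys)
  interpret vs: vector_space scale by fact
  from Cons.prems obtain k where "b - scale k y \<in> vs.span (set ys)"
    using vs.span_insert by auto
  from Cons.IH[OF this] obtain cs where "length cs = length ys"
    "b - scale k y = (\<Sum>p\<leftarrow>zip cs ys. scale (fst p) (snd p))" by blast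
  then show ?case by (intro exI[of _ "k # cs"]) (auto simp: algebra_simps)
qed

lemma bil_zero:
  fixes scale :: "'k::field \<Rightarrow> 'h::ring_1 \<Rightarrow> 'h"
  assumes VS: "vector_space scale"
   and B2: "\<And>c x z. Bf (scale c x) z = scale c (Bf x z)"
   and B4: "\<And>c x z. Bf x (scale c z) = scale c (Bf x z)"
  shows "Bf 0 z = 0" "Bf x 0 = 0"
proof -
  interpret vs: vector_space scale by fact
  have "Bf (scale 0 0) z = scale 0 (Bf 0 z)" by (rule B2)
  then show "Bf 0 z = 0" by simp
  have "Bf x (scale 0 0) = scale 0 (Bf x 0)" by (rule B4)
  then show "Bf x 0 = 0" by simp
qed

lemma tensor_transfer:
  fixes scale :: "'k::field \<Rightarrow> 'h::ring_1 \<Rightarrow> 'h" and Bf :: "'h \<Rightarrow> 'h \<Rightarrow> 'h"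
  assumes VS: "vector_space scale"
   and B1: "\<And>x y z. Bf (x+y) z = Bf x z + Bf y z"
   and B2: "\<And>c x z. Bf (scale c x) z = scale c (Bf x z)"
   and B3: "\<And>x y z. Bf x (y+z) = Bf x y + Bf x z"
   and B4: "\<And>c x z. Bf x (scale c z) = scale c (Bf x z)"
  shows "(\<And>f g. lin scale f \<Longrightarrow> lin scale g \<Longrightarrow> ev2 f g T = 0) \<Longrightarrow>
     (\<Sum>t\<leftarrow>T. Bf (fst t) (snd t)) = 0"
proof (induction "length T" arbitrary: T rule: less_induct)
  case less
  interpret vs: vector_space scale by fact
  have Bz1: "Bf 0 z = 0" for z by (rule bil_zero(1)[where Bf=Bf, OF VS B2 B4])
  have Bz2: "Bf x 0 = 0" for x by (rule bil_zero(2)[where Bf=Bf, OF VS B2 B4])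
  note Bz = Bz1 Bz2
  show ?case
  proof (cases T)
    case Nil then show ?thesis by simp
  next
    case (Cons t T')
    obtain a b where t: "t = (a, b)" by fastforce
    show ?thesis
    proof (cases "b \<in> vs.span (set (map snd T'))")
      case True
      from span_list_coeffs[OF VS True] obtain cs where cs: "length cs = length T'"
        "b = (\<Sum>p\<leftarrow>zip cs (map snd T'). scale (fst p) (snd p))" by (metis length_map)
      have b': "b = (\<Sum>p\<leftarrow>zip cs T'. scale (fst p) (snd (snd p)))"
        using cs(2) by (simp add: zip_map2 comp_def case_prod_beta)
      define T'' where "T'' = map (\<lambda>p. (fst (snd p) + scale (fst p) a, snd (snd p))) (zip cs T')"
      have sT: "(\<Sum>p\<leftarrow>zip cs T'. F (snd p)) = (\<Sum>x\<leftarrow>T'. F x)" for F :: "'h\<times>'h \<Rightarrow> 'z::comm_monoid_add"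
      proof -
        have "(\<Sum>p\<leftarrow>zip cs T'. F (snd p)) = sum_list (map F (map snd (zip cs T')))"
          by (simp add: comp_def)
        also have "\<dots> = (\<Sum>x\<leftarrow>T'. F x)" using cs(1) by simp
        finally show ?thesis .
      qed
      have ev: "ev2 f g T'' = 0" if fg: "lin scale f" "lin scale g" for f g
      proof -
        have "ev2 f g T'' = (\<Sum>p\<leftarrow>zip cs T'. f (fst (snd p)) * g (snd (snd p)))
              + f a * (\<Sum>p\<leftarrow>zip cs T'. fst p * g (snd (snd p)))"
        proof -
          have "ev2 f g T'' = (\<Sum>p\<leftarrow>zip cs T'. f (fst (snd p)) * g (snd (snd p)) + f a * (fst p * g (snd (snd p))))"
            unfolding T''_def ev2_alt
            by (simp add: comp_def lin_props[OF fg(1)] distrib_right mult.assoc mult.left_commute)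
          then show ?thesis by (simp only: sum_list_addf sum_list_const_mult)
        qed
        also have "(\<Sum>p\<leftarrow>zip cs T'. fst p * g (snd (snd p))) = g b"
          unfolding b' lin_sum_list[OF fg(2)] by (simp add: lin_props[OF fg(2)])
        also have "(\<Sum>p\<leftarrow>zip cs T'. f (fst (snd p)) * g (snd (snd p))) = ev2 f g T'"
          unfolding ev2_alt using sT[of "\<lambda>t. f (fst t) * g (snd t)"] by simp
        finally have "ev2 f g T'' = ev2 f g T' + f a * g b" .
        also have "\<dots> = ev2 f g T" unfolding ev2_alt Cons t by simp
        finally show ?thesis using less.prems[OF fg] by simp
      qed
      have "length T'' < length T" unfolding T''_def Cons using cs(1) by simp
      from less.hyps[OF this ev] have h: "(\<Sum>t\<leftarrow>T''. Bf (fst t) (snd t)) = 0" .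
      have bsum: "Bf a b = (\<Sum>p\<leftarrow>zip cs T'. scale (fst p) (Bf a (snd (snd p))))"
      proof -
        have gen: "Bf a (\<Sum>x\<leftarrow>xs. scale (fst x) (snd (snd x))) = (\<Sum>x\<leftarrow>xs. scale (fst x) (Bf a (snd (snd x))))"
          for xs :: "('k \<times> 'h \<times> 'h) list"
          by (induction xs) (simp_all add: Bz B3 B4)
        show ?thesis unfolding b' by (rule gen)
      qed
      have "(\<Sum>t\<leftarrow>T''. Bf (fst t) (snd t)) =
            (\<Sum>p\<leftarrow>zip cs T'. Bf (fst (snd p)) (snd (snd p))) + Bf a b"
        unfolding T''_def bsum by (simp add: comp_def B1 B2 sum_list_addf)
      also have "(\<Sum>p\<leftarrow>zip cs T'. Bf (fst (snd p)) (snd (snd p))) = (\<Sum>t\<leftarrow>T'. Bf (fst t) (snd t))"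
        using sT[of "\<lambda>t. Bf (fst t) (snd t)"] by simp
      finally show ?thesis using h Cons t by (simp add: add.commute)
    next
      case False
      obtain C where C: "C \<subseteq> set (map snd T')" "vs.independent C" "set (map snd T') \<subseteq> vs.span C"
        using vs.maximal_independent_subset by blast
      have "vs.span (set (map snd T')) \<subseteq> vs.span C"
        using C(3) vs.span_minimal vs.subspace_span by blast
      moreover have "vs.span C \<subseteq> vs.span (set (map snd T'))" using C(1) vs.span_mono by blast
      ultimately have nb: "b \<notin> vs.span C" using False by blast
      obtain g where g: "lin scale g" "g b = 1" "\<forall>y\<in>vs.span C. g y = 0"
        using exists_sep[OF VS C(2) nb] by blast
      have g0: "\<forall>y\<in>set T'. g (snd y) = 0" using g(3) C(3) by auto
      have fa: "f a = 0" if f: "lin scale f" for f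
      proof -
        have "ev2 f g T = f a + (\<Sum>y\<leftarrow>T'. f (fst y) * g (snd y))"
          unfolding ev2_alt Cons t using g(2) by simp
        also have "(\<Sum>y\<leftarrow>T'. f (fst y) * g (snd y)) = 0"
          using g0 by (induction T') auto
        finally show ?thesis using less.prems[OF f g(1)] by simp
      qed
      have a0: "a = 0" using separate[OF VS, of a 0] fa lin_props(3) by metis
      have ev: "ev2 f g' T' = 0" if "lin scale f" "lin scale g'" for f g'
        using less.prems[OF that] unfolding ev2_alt Cons t a0 by (simp add: lin_props[OF that(1)])
      have "length T' < length T" using Cons by simp
      from less.hyps[OF this ev] show ?thesis unfolding Cons t a0 by (simp add: Bz)
    qed
  qed
qed



lemma lin_mult_left:
  fixes scale :: "'k::field \<Rightarrow> 'h::ring_1 \<Rightarrow> 'h"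
  assumes p: "lin scale p" and SC: "\<forall>c x y. scale c (x * y) = scale c x * y \<and> scale c (x * y) = x * scale c y"
  shows "lin scale (\<lambda>a. p (s * a))" "lin scale (\<lambda>a. p (a * s))"
proof -
  have VS: "vector_space scale" using lin_props(4)[OF p] .
  have sc: "\<And>c x y. scale c x * y = scale c (x * y)" "\<And>c x y. x * scale c y = scale c (x * y)"
    using SC by metis+
  show "lin scale (\<lambda>a. p (s * a))" unfolding lin_def linear_iff
    using VS vs_field lin_props[OF p] sc by (simp add: distrib_left)
  show "lin scale (\<lambda>a. p (a * s))" unfolding lin_def linear_iff
    using VS vs_field lin_props[OF p] sc by (simp add: distrib_right)
qed

lemma ev2_tmul2_left_form:
  "ev2 p q (tmul2 S T) = (\<Sum>s\<leftarrow>S. ev2 (\<lambda>a. p (fst s * a)) (\<lambda>b. q (snd s * b)) T)"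
  unfolding ev2_alt sum_tmul2 fst_conv snd_conv ..

lemma ev2_tmul2_right_form:
  "ev2 p q (tmul2 T S) = (\<Sum>s\<leftarrow>S. ev2 (\<lambda>a. p (a * fst s)) (\<lambda>b. q (b * snd s)) T)"
  unfolding ev2_alt sum_tmul2 fst_conv snd_conv by (rule sum_list_swap)

lemma teq2_tmul2:
  fixes scale :: "'k::field \<Rightarrow> 'h::ring_1 \<Rightarrow> 'h"
  assumes p: "lin scale p" and q: "lin scale q"
    and SC: "\<forall>c x y. scale c (x * y) = scale c x * y \<and> scale c (x * y) = x * scale c y"
    and T: "teq2 scale T T'"
  shows "ev2 p q (tmul2 S T) = ev2 p q (tmul2 S T')"
        "ev2 p q (tmul2 T S) = ev2 p q (tmul2 T' S)"
proof -
  show "ev2 p q (tmul2 S T) = ev2 p q (tmul2 S T')"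
    unfolding ev2_tmul2_left_form
    using T lin_mult_left[OF p SC] lin_mult_left[OF q SC] unfolding teq2_def by simp
  show "ev2 p q (tmul2 T S) = ev2 p q (tmul2 T' S)"
    unfolding ev2_tmul2_right_form
    using T lin_mult_left[OF p SC] lin_mult_left[OF q SC] unfolding teq2_def by simp
qed

lemma ev2_swap: "ev2 p q (map (\<lambda>(a, b). (b, a)) T) = ev2 q p T"
  unfolding ev2_alt by (induction T) (auto simp: mult.commute)

lemma qt_relation:
  fixes scale :: "'k::field \<Rightarrow> 'h::ring_1 \<Rightarrow> 'h"
  assumes QT: "quasitriangular scale \<Delta> R"
    and SC: "\<forall>c x y. scale c (x * y) = scale c x * y \<and> scale c (x * y) = x * scale c y"
    and p: "lin scale p" and q: "lin scale q"
  shows "ev2 p q (tmul2 (map (\<lambda>(a, b). (b, a)) (\<Delta> h)) R) = ev2 p q (tmul2 R (\<Delta> h))"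
proof -
  obtain Rinv where Ri: "teq2 scale (tmul2 Rinv R) [(1, 1)]"
    "teq2 scale (map (\<lambda>(a, b). (b, a)) (\<Delta> h)) (tmul2 (tmul2 R (\<Delta> h)) Rinv)"
    using QT unfolding quasitriangular_def by blast
  have "ev2 p q (tmul2 (map (\<lambda>(a, b). (b, a)) (\<Delta> h)) R)
      = ev2 p q (tmul2 (tmul2 (tmul2 R (\<Delta> h)) Rinv) R)"
    by (rule teq2_tmul2(2)[OF p q SC Ri(2)])
  also have "\<dots> = ev2 p q (tmul2 (tmul2 R (\<Delta> h)) (tmul2 Rinv R))"
    by (rule ev2_tmul2_assoc)
  also have "\<dots> = ev2 p q (tmul2 (tmul2 R (\<Delta> h)) [(1,1)])"
    by (rule teq2_tmul2(1)[OF p q SC Ri(1)])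
  finally show ?thesis by (simp add: tmul2_one)
qed



definition uel :: "('k::field \<Rightarrow> 'h::ring_1 \<Rightarrow> 'h) \<Rightarrow> ('h \<Rightarrow> 'k) \<Rightarrow> ('h \<times> 'h) list \<Rightarrow> 'h" where
  "uel scale \<alpha> R = (\<Sum>t\<leftarrow>R. scale (\<alpha> (fst t)) (snd t))"

lemma uel_fun: "lin scale f \<Longrightarrow> f (uel scale \<alpha> R) = ev2 \<alpha> f R"
  unfolding uel_def ev2_alt by (simp add: lin_sum_list lin_props comp_def)

lemma uel_mult:
  fixes scale :: "'k::field \<Rightarrow> 'h::ring_1 \<Rightarrow> 'h"
  assumes f: "lin scale f"
    and SC: "\<forall>c x y. scale c (x * y) = scale c x * y \<and> scale c (x * y) = x * scale c y"
  shows "f (x * uel scale \<alpha> R) = (\<Sum>t\<leftarrow>R. \<alpha> (fst t) * f (x * snd t))"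
        "f (uel scale \<alpha> R * x) = (\<Sum>t\<leftarrow>R. \<alpha> (fst t) * f (snd t * x))"
proof -
  have sc: "\<And>c x y. scale c x * y = scale c (x * y)" "\<And>c x y. x * scale c y = scale c (x * y)"
    using SC by metis+
  have "x * uel scale \<alpha> R = (\<Sum>t\<leftarrow>R. scale (\<alpha> (fst t)) (x * snd t))"
    unfolding uel_def by (induction R) (simp_all add: distrib_left sc)
  then show "f (x * uel scale \<alpha> R) = (\<Sum>t\<leftarrow>R. \<alpha> (fst t) * f (x * snd t))"
    by (simp add: lin_sum_list[OF f] lin_props[OF f] comp_def)
  have "uel scale \<alpha> R * x = (\<Sum>t\<leftarrow>R. scale (\<alpha> (fst t)) (snd t * x))"
    unfolding uel_def by (induction R) (simp_all add: distrib_right sc)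
  then show "f (uel scale \<alpha> R * x) = (\<Sum>t\<leftarrow>R. \<alpha> (fst t) * f (snd t * x))"
    by (simp add: lin_sum_list[OF f] lin_props[OF f] comp_def)
qed

lemma ev2_tmul2_uel:
  fixes scale :: "'k::field \<Rightarrow> 'h::ring_1 \<Rightarrow> 'h"
  assumes g: "lin scale g"
    and SC: "\<forall>c x y. scale c (x * y) = scale c x * y \<and> scale c (x * y) = x * scale c y"
    and am: "\<forall>x y. \<alpha> (x * y) = \<alpha> x * \<alpha> y"
  shows "ev2 \<alpha> g (tmul2 Y R) = (\<Sum>y\<leftarrow>Y. \<alpha> (fst y) * g (snd y * uel scale \<alpha> R))"
        "ev2 \<alpha> g (tmul2 R Y) = (\<Sum>y\<leftarrow>Y. \<alpha> (fst y) * g (uel scale \<alpha> R * snd y))"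
proof -
  show "ev2 \<alpha> g (tmul2 Y R) = (\<Sum>y\<leftarrow>Y. \<alpha> (fst y) * g (snd y * uel scale \<alpha> R))"
    unfolding ev2_alt sum_tmul2 uel_mult(1)[OF g SC]
    by (simp add: am sum_list_const_mult[symmetric] mult.assoc)
  have "ev2 \<alpha> g (tmul2 R Y) = (\<Sum>y\<leftarrow>Y. \<Sum>t\<leftarrow>R. \<alpha> (fst t * fst y) * g (snd t * snd y))"
    unfolding ev2_alt sum_tmul2 fst_conv snd_conv by (rule sum_list_swap)
  then show "ev2 \<alpha> g (tmul2 R Y) = (\<Sum>y\<leftarrow>Y. \<alpha> (fst y) * g (uel scale \<alpha> R * snd y))"
    unfolding uel_mult(2)[OF g SC]
    by (simp add: am sum_list_const_mult[symmetric] mult.assoc mult.left_commute)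
qed

lemma ev2_mult:
  assumes am: "\<forall>x y. \<alpha> (x * y) = \<alpha> x * \<alpha> y" and bm: "\<forall>x y. \<beta> (x * y) = \<beta> x * \<beta> y"
  shows "ev2 \<alpha> \<beta> (tmul2 T S) = ev2 \<alpha> \<beta> T * (ev2 \<alpha> \<beta> S :: 'k::field)"
  unfolding ev2_alt sum_tmul2
  by (simp add: am bm sum_list_const_mult[symmetric] sum_list_mult_const[symmetric] mult_ac)



lemma hopf_parts:
  assumes "hopf_algebra scale \<Delta> \<epsilon> S"
  shows "vector_space scale"
    "\<forall>c x y. scale c (x * y) = scale c x * y \<and> scale c (x * y) = x * scale c y"
    "\<forall>x y. teq2 scale (\<Delta> (x + y)) (\<Delta> x @ \<Delta> y)"
    "\<forall>c x. teq2 scale (\<Delta> (scale c x)) (map (\<lambda>(a, b). (scale c a, b)) (\<Delta> x))"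
    "lin scale \<epsilon>" "\<forall>x y. \<epsilon> (x * y) = \<epsilon> x * \<epsilon> y" "\<epsilon> 1 = 1"
    "\<forall>h. sum_list (map (\<lambda>(a, b). scale (\<epsilon> a) b) (\<Delta> h)) = h"
    "Vector_Spaces.linear scale scale S"
    "\<forall>h. sum_list (map (\<lambda>(a, b). S a * b) (\<Delta> h)) = scale (\<epsilon> h) 1"
  using assms unfolding hopf_algebra_def by blast+

lemma Delta_fun:
  fixes scale :: "'k::field \<Rightarrow> 'h::ring_1 \<Rightarrow> 'h"
  assumes H: "hopf_algebra scale \<Delta> \<epsilon> S" and f: "lin scale f" and g: "lin scale g"
  shows "ev2 f g (\<Delta> (\<Sum>t\<leftarrow>R. scale (\<alpha> (fst t)) (snd t))) = (\<Sum>t\<leftarrow>R. \<alpha> (fst t) * ev2 f g (\<Delta> (snd t)))"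
proof -
  note hp = hopf_parts[OF H]
  interpret vs: vector_space scale by (rule hp(1))
  have add: "ev2 f g (\<Delta> (x + y)) = ev2 f g (\<Delta> x) + ev2 f g (\<Delta> y)" for x y
    using hp(3) f g unfolding teq2_def by (simp add: ev2_alt)
  have sc: "ev2 f g (\<Delta> (scale c x)) = c * ev2 f g (\<Delta> x)" for c x
  proof -
    have "ev2 f g (\<Delta> (scale c x)) = ev2 f g (map (\<lambda>(a, b). (scale c a, b)) (\<Delta> x))"
      using hp(4) f g unfolding teq2_def by blast
    also have "\<dots> = c * ev2 f g (\<Delta> x)" unfolding ev2_alt
      by (simp add: case_prod_beta comp_def lin_props[OF f] sum_list_const_mult[symmetric] mult.assoc)
    finally show ?thesis .
  qed
  have z: "ev2 f g (\<Delta> 0) = 0" using sc[of 0 0] by simp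
  show ?thesis by (induction R) (simp_all add: add sc z)
qed



lemma grouplike_inv:
  fixes scale :: "'k::field \<Rightarrow> 'h::ring_1 \<Rightarrow> 'h"
  assumes H: "hopf_algebra scale \<Delta> \<epsilon> S" and x: "x \<in> grouplikes scale \<Delta>"
  shows "S x * x = 1"
proof -
  note hp = hopf_parts[OF H]
  note VS = hp(1)
  interpret vs: vector_space scale by (rule VS)
  have sc: "\<And>c x y. scale c x * y = scale c (x * y)" "\<And>c x y. x * scale c y = scale c (x * y)"
    using hp(2) by metis+
  have x0: "x \<noteq> 0" and tx: "teq2 scale (\<Delta> x) [(x, x)]" using x unfolding grouplikes_def by auto
  have Sl: "S (a + b) = S a + S b" "S (scale c a) = scale c (S a)" for a b c
    using hp(9) unfolding linear_iff by auto
  have Sneg: "S (- a) = - S a" for a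
  proof -
    have "S (-a + a) = S (-a) + S a" by (rule Sl(1))
    then have "S (- a) + S a = S 0" by simp
    moreover have "S 0 = 0" using Sl(2)[of 0 0] by simp
    ultimately show ?thesis by (simp add: eq_neg_iff_add_eq_0)
  qed
  have ex: "\<epsilon> x = 1"
  proof -
    obtain f where f: "lin scale f" "f x = 1" using exists_nonzero_fun[OF VS x0] by blast
    have "ev2 \<epsilon> f (\<Delta> x) = f x"
    proof -
      have "f (sum_list (map (\<lambda>(a, b). scale (\<epsilon> a) b) (\<Delta> x))) = f x" using hp(8) by simp
      then show ?thesis unfolding ev2_alt
        by (simp add: lin_sum_list[OF f(1)] lin_props[OF f(1)] case_prod_beta comp_def)
    qed
    moreover have "ev2 \<epsilon> f (\<Delta> x) = \<epsilon> x * f x" using tx hp(5) f(1) unfolding teq2_def ev2_alt by simp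
    ultimately show ?thesis using f(2) by simp
  qed
  have tr: "(\<Sum>t\<leftarrow>\<Delta> x @ [(-x, x)]. S (fst t) * snd t) = 0"
  proof (rule tensor_transfer[where Bf = "\<lambda>a b. S a * b", OF VS])
    show "S (a + b) * z = S a * z + S b * z" for a b z by (simp add: Sl distrib_right)
    show "S (scale c a) * z = scale c (S a * z)" for c a z by (simp add: Sl sc)
    show "S a * (b + z) = S a * b + S a * z" for a b z by (simp add: distrib_left)
    show "S a * scale c z = scale c (S a * z)" for c a z by (simp add: sc)
    show "ev2 f g (\<Delta> x @ [(- x, x)]) = 0" if "lin scale f" "lin scale g" for f g
    proof -
      have "ev2 f g (\<Delta> x) = f x * g x" using tx that unfolding teq2_def ev2_alt by simp
      moreover have "f (- x) = - f x" using lin_diff[OF that(1), of 0 x] lin_props(3)[OF that(1)] by simp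
      ultimately show ?thesis unfolding ev2_alt by simp
    qed
  qed
  then have "(\<Sum>t\<leftarrow>\<Delta> x. S (fst t) * snd t) = S x * x" by (simp add: Sneg)
  moreover have "(\<Sum>t\<leftarrow>\<Delta> x. S (fst t) * snd t) = scale (\<epsilon> x) 1"
  proof -
    have "sum_list (map (\<lambda>(a,b). S a * b) (\<Delta> x)) = scale (\<epsilon> x) 1" using hp(10) by blast
    then show ?thesis unfolding case_prod_beta .
  qed
  ultimately show ?thesis using ex by simp
qed



theorem mainTheorem12:
  fixes scale :: "'k::field \<Rightarrow> 'h::ring_1 \<Rightarrow> 'h"
    and \<Delta> :: "'h \<Rightarrow> ('h \<times> 'h) list"
    and \<epsilon> :: "'h \<Rightarrow> 'k"
    and S :: "'h \<Rightarrow> 'h"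
    and R :: "('h \<times> 'h) list"
  assumes "hopf_algebra scale \<Delta> \<epsilon> S"
    and "quasitriangular scale \<Delta> R"
  shows "card (dual_grouplikes scale) = 1 \<or>
         (card (dual_grouplikes scale) \<noteq> 1 \<and>
            dual_grouplikes scale \<inter> dual_center scale \<Delta> \<noteq> {\<epsilon>}) \<or>
         (card (dual_grouplikes scale) \<noteq> 1 \<and>
            dual_grouplikes scale \<inter> dual_center scale \<Delta> = {\<epsilon>} \<and>
            grouplikes_center scale \<Delta> \<noteq> {1})"
proof (cases "card (dual_grouplikes scale) = 1 \<or> dual_grouplikes scale \<inter> dual_center scale \<Delta> \<noteq> {\<epsilon>}")
  case True then show ?thesis by blast
next
  case False
  note H = assms(1) and QT = assms(2)
  note hp = hopf_parts[OF H]
  note VS = hp(1) and SC = hp(2)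
  interpret vs: vector_space scale by (rule VS)
  have card: "card (dual_grouplikes scale) \<noteq> 1" and inter: "dual_grouplikes scale \<inter> dual_center scale \<Delta> = {\<epsilon>}"
    using False by auto
  have eG: "\<epsilon> \<in> dual_grouplikes scale" using inter by auto
  have "dual_grouplikes scale \<noteq> {\<epsilon>}" using card by auto
  then obtain \<alpha> where aG: "\<alpha> \<in> dual_grouplikes scale" and ane: "\<alpha> \<noteq> \<epsilon>"
    using eG by blast
  have al: "lin scale \<alpha>" and am: "\<forall>x y. \<alpha> (x * y) = \<alpha> x * \<alpha> y" and an0: "\<alpha> \<noteq> (\<lambda>_. 0)"
    and aF: "\<alpha> \<in> finite_dual scale"
    using aG unfolding dual_grouplikes_def finite_dual_def by auto
  have a1: "\<alpha> 1 = 1"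
  proof -
    obtain z where "\<alpha> z \<noteq> 0" using an0 by blast
    moreover have "\<alpha> z = \<alpha> z * \<alpha> 1" using am by (metis mult_1_right)
    ultimately show ?thesis by simp
  qed
  define u where "u = uel scale \<alpha> R"
  obtain Rinv where Rinv: "teq2 scale (tmul2 R Rinv) [(1, 1)]"
    using QT unfolding quasitriangular_def by blast
  have qt3: "teq3 scale (id_delta \<Delta> R)
       (tmul3 (map (\<lambda>(a, b). (a, 1, b)) R) (map (\<lambda>(a, b). (a, b, 1)) R))"
    using QT unfolding quasitriangular_def by blast
  have u0: "u \<noteq> 0"
  proof
    assume "u = 0"
    then have "ev2 \<alpha> \<epsilon> R = 0" using uel_fun[OF hp(5)] lin_props(3)[OF hp(5)] unfolding u_def by metis
    moreover have "ev2 \<alpha> \<epsilon> (tmul2 R Rinv) = 1"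
      using Rinv al hp(5) a1 hp(7) unfolding teq2_def ev2_alt by simp
    ultimately show False using ev2_mult[OF am hp(6)] by simp
  qed
  have ugl: "teq2 scale (\<Delta> u) [(u, u)]"
    unfolding teq2_def
  proof (intro allI impI)
    fix f g assume fg: "lin scale f \<and> lin scale g"
    then have f: "lin scale f" and g: "lin scale g" by auto
    have "ev2 f g (\<Delta> u) = (\<Sum>t\<leftarrow>R. \<alpha> (fst t) * ev2 f g (\<Delta> (snd t)))"
      unfolding u_def uel_def by (rule Delta_fun[OF H f g])
    also have "\<dots> = ev3 \<alpha> f g (id_delta \<Delta> R)"
      unfolding ev3_alt sum_id_delta ev2_alt
      by (simp add: sum_list_const_mult[symmetric] mult.assoc)
    also have "\<dots> = ev3 \<alpha> f g (tmul3 (map (\<lambda>(a, b). (a, 1, b)) R) (map (\<lambda>(a, b). (a, b, 1)) R))"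
      using qt3 al f g unfolding teq3_def by blast
    also have "\<dots> = ev2 \<alpha> g R * ev2 \<alpha> f R"
      unfolding ev3_alt sum_tmul3 ev2_alt
      by (simp add: case_prod_beta comp_def am sum_list_const_mult[symmetric]
           sum_list_mult_const[symmetric] mult_ac)
    also have "\<dots> = ev2 f g [(u, u)]"
      unfolding u_def by (simp add: uel_fun[OF f] uel_fun[OF g] ev2_alt mult.commute)
    finally show "ev2 f g (\<Delta> u) = ev2 f g [(u, u)]" .
  qed
  have uG: "u \<in> grouplikes scale \<Delta>" using u0 ugl unfolding grouplikes_def by auto
  have ucomm: "u * x = x * u" if x: "x \<in> grouplikes scale \<Delta>" for x
  proof -
    have tx: "teq2 scale (\<Delta> x) [(x, x)]" using x unfolding grouplikes_def by auto
    have "\<alpha> (S x) * \<alpha> x = 1" using grouplike_inv[OF H x] am a1 by metis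
    then have ax: "\<alpha> x \<noteq> 0" by auto
    have txs: "teq2 scale (map (\<lambda>(a, b). (b, a)) (\<Delta> x)) [(x, x)]"
      unfolding teq2_def ev2_swap
    proof (intro allI impI)
      fix f g assume "lin scale f \<and> lin scale g"
      then have "ev2 g f (\<Delta> x) = ev2 g f [(x, x)]" using tx unfolding teq2_def by blast
      then show "ev2 g f (\<Delta> x) = ev2 f g [(x, x)]" by (simp add: ev2_alt mult.commute)
    qed
    have "f (x * u) = f (u * x)" if f: "lin scale f" for f
    proof -
      have "ev2 \<alpha> f (tmul2 [(x, x)] R) = ev2 \<alpha> f (tmul2 R [(x, x)])"
        using qt_relation[OF QT SC al f, of x] teq2_tmul2(2)[OF al f SC txs, of R]
          teq2_tmul2(1)[OF al f SC tx, of R] by simp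
      then have "\<alpha> x * f (x * u) = \<alpha> x * f (u * x)"
        unfolding ev2_tmul2_uel(1)[OF f SC am, where Y="[(x,x)]" and R=R]
          ev2_tmul2_uel(2)[OF f SC am, where Y="[(x,x)]" and R=R] u_def by simp
      then show ?thesis using ax by simp
    qed
    then show ?thesis using separate[OF VS] by metis
  qed
  have u1: "u \<noteq> 1"
  proof
    assume u1: "u = 1"
    have "\<alpha> \<in> dual_center scale \<Delta>"
      unfolding dual_center_def
    proof (intro CollectI conjI ballI aF)
      fix g assume "g \<in> finite_dual scale"
      then have g: "lin scale g" unfolding finite_dual_def by auto
      show "conv \<Delta> \<alpha> g = conv \<Delta> g \<alpha>"
      proof
        fix h
        have "ev2 \<alpha> g (tmul2 (map (\<lambda>(a, b). (b, a)) (\<Delta> h)) R) = ev2 \<alpha> g (tmul2 R (\<Delta> h))"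
          by (rule qt_relation[OF QT SC al g])
        then have "ev2 \<alpha> g (map (\<lambda>(a, b). (b, a)) (\<Delta> h)) = ev2 \<alpha> g (\<Delta> h)"
          unfolding ev2_tmul2_uel(1)[OF g SC am, where R=R] ev2_tmul2_uel(2)[OF g SC am, where R=R] u_def[symmetric] u1 by (simp add: ev2_alt)
        then show "conv \<Delta> \<alpha> g h = conv \<Delta> g \<alpha> h"
          unfolding conv_def ev2_swap by simp
      qed
    qed
    then have "\<alpha> \<in> dual_grouplikes scale \<inter> dual_center scale \<Delta>" using aG by blast
    then show False using inter ane by blast
  qed
  have "u \<in> grouplikes_center scale \<Delta>"
    unfolding grouplikes_center_def using uG ucomm by blast
  then have "grouplikes_center scale \<Delta> \<noteq> {1}" using u1 by blast
  then show ?thesis using card inter by blast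
qed

end
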